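(* Let $d\ge 1$, $T\ge 1$, let $\mathcal{X}\subseteq\mathbb{R}^d$ be a non-empty closed convex set containing $\mathbf{0}$ with finite diameter $D=\max_{x,y\in\mathcal{X}}\|x-y\|$, and let $0<\mu\le L$. Let $f_1,\dots,f_T:\mathcal{X}\to[0,\infty)$ be differentiable functions such that, for every $t$ and all $x,y\in\mathcal{X}$, $\frac{\mu}{2}\|y-x\|^2\le f_t(y)-f_t(x)-\langle\nabla f_t(x),y-x\rangle\le\frac{L}{2}\|y-x\|^2$, and such that there is a finite constant $G$ with $\max_{x\in\mathcal{X}}\|\nabla f_t(x)\|=G$ for all $t$. Let $x_0=\mathbf{0}$. Then the OMGD algorithm with $K=\lceil\frac{L+\mu}{2\mu}\ln4\rceil$ satisfies $$C_{\mathcal{A}_o}-C_{\mathsf{OPT}}\le\Big(2G+D\Big(10-\frac{\mu}{2(\mu+4)}\Big)\Big)(\|x_1^\star\|+\mathcal{P}_T^\star).$$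
   Context: $x_t^\star=\arg\min_{x\in\mathcal{X}}f_t(x)$, $\mathcal{P}_T^\star=\sum_{t=2}^T\|x_t^\star-x_{t-1}^\star\|$. Quadratic-switching cost of $(y_1,\dots,y_T)\in\mathcal{X}^T$ with $y_0=x_0$: $\sum_{t=1}^T\big(f_t(y_t)+\frac12\|y_t-y_{t-1}\|^2\big)$; $C_{\mathsf{OPT}}$ is its minimum over $\mathcal{X}^T$. OMGD with parameter $K$: $x_1=x_0$; for $t=2,\dots,T$, $z_t^{(0)}=x_{t-1}$, $z_t^{(k)}=\Pi_{\mathcal{X}}\big(z_t^{(k-1)}-\frac1L\nabla f_{t-1}(z_t^{(k-1)})\big)$ ($k=1,\dots,K$), $x_t=z_t^{(K)}$, where $\Pi_{\mathcal{X}}$ is Euclidean projection onto $\mathcal{X}$. $C_{\mathcal{A}_o}$ is the quadratic-switching cost of $(x_1,\dots,x_T)$. *)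

theory Defs
  imports "HOL-Analysis.Analysis"
begin

text \<open>Minimiser x_t^star of f_t over X (unique under strong convexity on a compact convex set).\<close>
definition xstar :: "'a set \<Rightarrow> (nat \<Rightarrow> 'a \<Rightarrow> real) \<Rightarrow> nat \<Rightarrow> 'a" where
  "xstar X f t = (SOME x. x \<in> X \<and> (\<forall>y\<in>X. f t x \<le> f t y))"

definition path_length :: "'a::real_normed_vector set \<Rightarrow> (nat \<Rightarrow> 'a \<Rightarrow> real) \<Rightarrow> nat \<Rightarrow> real" where
  "path_length X f T = (\<Sum>t=2..T. norm (xstar X f t - xstar X f (t - 1)))"

definition qs_cost :: "(nat \<Rightarrow> 'a::real_normed_vector \<Rightarrow> real) \<Rightarrow> nat \<Rightarrow> 'a \<Rightarrow> (nat \<Rightarrow> 'a) \<Rightarrow> real" where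
  "qs_cost f T x0 y = (\<Sum>t=1..T. f t (y t) + (1/2) * (norm (y t - (if t = 1 then x0 else y (t - 1))))\<^sup>2)"

definition C_OPT :: "'a::real_normed_vector set \<Rightarrow> (nat \<Rightarrow> 'a \<Rightarrow> real) \<Rightarrow> nat \<Rightarrow> 'a \<Rightarrow> real" where
  "C_OPT X f T x0 = Inf {qs_cost f T x0 y | y. \<forall>t\<in>{1..T}. y t \<in> X}"

definition pgd_step :: "'a::euclidean_space set \<Rightarrow> real \<Rightarrow> ('a \<Rightarrow> 'a) \<Rightarrow> 'a \<Rightarrow> 'a" where
  "pgd_step X L g z = closest_point X (z - (1/L) *\<^sub>R g z)"

text \<open>OMGD iterates: x_1 = x_0, x_t = (pgd step for f_(t-1)) iterated K times from x_(t-1).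
  Index 0 is set to x0 for convenience.\<close>
fun omgd :: "'a::euclidean_space set \<Rightarrow> real \<Rightarrow> (nat \<Rightarrow> 'a \<Rightarrow> 'a) \<Rightarrow> nat \<Rightarrow> 'a \<Rightarrow> nat \<Rightarrow> 'a" where
  "omgd X L grad K x0 0 = x0"
| "omgd X L grad K x0 (Suc 0) = x0"
| "omgd X L grad K x0 (Suc (Suc n)) =
     (pgd_step X L (grad (Suc n)) ^^ K) (omgd X L grad K x0 (Suc n))"

end

theory Submission
  imports Defs
begin

lemma opt_cond:
  fixes X :: "'a::euclidean_space set"
  assumes cvx: "convex X" and L: "0 < L"
    and xs: "xs \<in> X" and mn: "\<forall>y\<in>X. F xs \<le> F y"
    and sm: "\<And>x y. x \<in> X \<Longrightarrow> y \<in> X \<Longrightarrow> F y - F x - g x \<bullet> (y - x) \<le> L / 2 * (norm (y - x))\<^sup>2"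
    and y: "y \<in> X"
  shows "g xs \<bullet> (y - xs) \<ge> 0"
proof (rule ccontr)
  assume "\<not> ?thesis"
  hence c: "g xs \<bullet> (y - xs) < 0" by simp
  define c where "c = g xs \<bullet> (y - xs)"
  define n where "n = (norm (y - xs))\<^sup>2"
  have "y \<noteq> xs" using c by auto
  hence npos: "n > 0" unfolding n_def by simp
  define s where "s = min 1 (- c / (L * n))"
  have s0: "s > 0" using c npos L unfolding s_def c_def by (simp add: field_simps)
  have s1: "s \<le> 1" unfolding s_def by simp
  have sLn: "s * (L * n) \<le> - c"
  proof -
    have Ln: "L * n > 0" using L npos by simp
    have "s \<le> (- c) / (L * n)" unfolding s_def by (rule min.cobounded2)
    thus ?thesis by (simp only: pos_le_divide_eq[OF Ln])
  qed
  define ys where "ys = xs + s *\<^sub>R (y - xs)"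
  have ysX: "ys \<in> X" unfolding ys_def
    using convexD_alt[OF cvx xs y, of s] s0 s1 by (simp add: algebra_simps)
  have h1: "F ys - F xs - g xs \<bullet> (ys - xs) \<le> L / 2 * (norm (ys - xs))\<^sup>2" using sm[OF xs ysX] .
  have h2: "g xs \<bullet> (ys - xs) = s * c" unfolding ys_def c_def by simp
  have h3: "(norm (ys - xs))\<^sup>2 = s\<^sup>2 * n" unfolding ys_def n_def
    using s0 by (simp add: power_mult_distrib)
  have h4: "F xs \<le> F ys" using mn ysX by auto
  have "0 \<le> s * c + L / 2 * (s\<^sup>2 * n)" using h1[unfolded h2 h3] h4 by linarith
  moreover have "L / 2 * (s\<^sup>2 * n) = s * (s * (L * n)) / 2" by (simp add: power2_eq_square)
  moreover have "s * (s * (L * n)) \<le> s * (- c)" using mult_left_mono[OF sLn less_imp_le[OF s0]] .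
  ultimately have "L / 2 * (s\<^sup>2 * n) \<le> s * (- c) / 2" by linarith
  with \<open>0 \<le> s * c + L / 2 * (s\<^sup>2 * n)\<close> have "0 \<le> s * c / 2" by simp
  with s0 c c_def show False by (simp add: zero_le_mult_iff)
qed

lemma one_step:
  fixes X :: "'a::euclidean_space set"
  assumes cvx: "convex X" and cl: "closed X" and ne: "X \<noteq> {}"
    and mu: "0 < \<mu>" "\<mu> \<le> L"
    and z: "z \<in> X" and xs: "xs \<in> X" and mn: "\<forall>y\<in>X. F xs \<le> F y"
    and sc: "\<And>x y. x \<in> X \<Longrightarrow> y \<in> X \<Longrightarrow> \<mu> / 2 * (norm (y - x))\<^sup>2 \<le> F y - F x - g x \<bullet> (y - x)"
    and sm: "\<And>x y. x \<in> X \<Longrightarrow> y \<in> X \<Longrightarrow> F y - F x - g x \<bullet> (y - x) \<le> L / 2 * (norm (y - x))\<^sup>2"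
  shows "(norm (pgd_step X L g z - xs))\<^sup>2 \<le> (L - \<mu>) / (L + \<mu>) * (norm (z - xs))\<^sup>2"
proof -
  have L: "L > 0" using mu by simp
  define w where "w = pgd_step X L g z"
  have wX: "w \<in> X" unfolding w_def pgd_step_def using closest_point_in_set[OF cl ne] .
  have 1: "F w - F z - g z \<bullet> (w - z) \<le> L / 2 * (norm (w - z))\<^sup>2" using sm[OF z wX] .
  have 2: "\<mu> / 2 * (norm (xs - z))\<^sup>2 \<le> F xs - F z - g z \<bullet> (xs - z)" using sc[OF z xs] .
  have 3: "(z - (1/L) *\<^sub>R g z - w) \<bullet> (xs - w) \<le> 0"
    unfolding w_def pgd_step_def by (rule closest_point_dot[OF cvx cl xs])
  have p3: "L * ((z - w) \<bullet> (xs - w)) \<le> g z \<bullet> (xs - w)"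
  proof -
    have "(z - (1/L) *\<^sub>R g z - w) \<bullet> (xs - w) = (z - w) \<bullet> (xs - w) - (1/L) * (g z \<bullet> (xs - w))"
      by (simp add: inner_diff_left algebra_simps)
    with 3 have "(z - w) \<bullet> (xs - w) \<le> (1/L) * (g z \<bullet> (xs - w))" by linarith
    hence "(z - w) \<bullet> (xs - w) \<le> (g z \<bullet> (xs - w)) / L" by simp
    hence "((z - w) \<bullet> (xs - w)) * L \<le> g z \<bullet> (xs - w)" by (simp only: pos_le_divide_eq[OF L])
    thus ?thesis by (simp add: mult.commute)
  qed
  have 4: "\<mu> / 2 * (norm (w - xs))\<^sup>2 \<le> F w - F xs"
  proof -
    have "g xs \<bullet> (w - xs) \<ge> 0" using opt_cond[OF cvx L xs mn sm wX] .
    thus ?thesis using sc[OF xs wX] by linarith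
  qed
  define a where "a = z - xs"
  define b where "b = w - xs"
  define A where "A = a \<bullet> a"
  define B where "B = b \<bullet> b"
  define C where "C = a \<bullet> b"
  have wz: "w - z = b - a" "z - w = a - b" "xs - w = - b" "xs - z = - a"
    by (simp_all add: a_def b_def)
  have e1: "(norm (w - z))\<^sup>2 = A - 2 * C + B"
    unfolding wz power2_norm_eq_inner A_def B_def C_def
    by (simp add: inner_diff_left inner_diff_right inner_commute[of b a])
  have e2: "(z - w) \<bullet> (xs - w) = B - C"
    unfolding wz B_def C_def by (simp add: inner_diff_left)
  have e3: "(norm (xs - z))\<^sup>2 = A" unfolding wz A_def power2_norm_eq_inner by simp
  have e4: "(norm (w - xs))\<^sup>2 = B" unfolding B_def b_def power2_norm_eq_inner by simp
  have e5: "(norm (z - xs))\<^sup>2 = A" unfolding A_def a_def power2_norm_eq_inner by simp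
  have e6: "g z \<bullet> (w - z) + g z \<bullet> (xs - w) = g z \<bullet> (xs - z)"
    by (simp add: inner_diff_right)
  have "(L + \<mu>) * B \<le> (L - \<mu>) * A"
    using 1[unfolded e1] 2[unfolded e3] p3[unfolded e2] 4[unfolded e4] e6
    by (simp add: algebra_simps)
  hence "B \<le> (L - \<mu>) * A / (L + \<mu>)" using mu by (simp add: field_simps)
  thus ?thesis unfolding w_def[symmetric] e4 e5 by simp
qed

lemma lin_aux:
  fixes S A Ben c Ge Den ae aen ap A' Be :: real
  assumes "S \<le> A - Ben" "c \<le> Ge + Den" "ae \<le> aen + ap" "A' = A + ap" "Be = ae - Ge" "Ben = aen + Den"
  shows "S + c \<le> A' - Be"
  using assms by linarith

lemma pgd_in:
  fixes X :: "'a::euclidean_space set"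
  assumes "closed X" "X \<noteq> {}" shows "pgd_step X L g z \<in> X"
  unfolding pgd_step_def using closest_point_in_set[OF assms] .

lemma funpow_in:
  fixes X :: "'a::euclidean_space set"
  assumes "closed X" "X \<noteq> {}" "z \<in> X" shows "(pgd_step X L g ^^ n) z \<in> X"
  by (induction n) (auto simp: assms pgd_in)

lemma iter_contr:
  fixes X :: "'a::euclidean_space set"
  assumes cvx: "convex X" and cl: "closed X" and ne: "X \<noteq> {}"
    and mu: "0 < \<mu>" "\<mu> \<le> L"
    and z: "z \<in> X" and xs: "xs \<in> X" and mn: "\<forall>y\<in>X. F xs \<le> F y"
    and sc: "\<And>x y. x \<in> X \<Longrightarrow> y \<in> X \<Longrightarrow> \<mu> / 2 * (norm (y - x))\<^sup>2 \<le> F y - F x - g x \<bullet> (y - x)"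
    and sm: "\<And>x y. x \<in> X \<Longrightarrow> y \<in> X \<Longrightarrow> F y - F x - g x \<bullet> (y - x) \<le> L / 2 * (norm (y - x))\<^sup>2"
  shows "(norm ((pgd_step X L g ^^ n) z - xs))\<^sup>2 \<le> ((L - \<mu>) / (L + \<mu>)) ^ n * (norm (z - xs))\<^sup>2"
proof (induction n)
  case 0
  show ?case by simp
next
  case (Suc n)
  define q where "q = (L - \<mu>) / (L + \<mu>)"
  have q0: "0 \<le> q" unfolding q_def using mu by simp
  have zn: "(pgd_step X L g ^^ n) z \<in> X" by (rule funpow_in[OF cl ne z])
  have "(norm ((pgd_step X L g ^^ Suc n) z - xs))\<^sup>2
        = (norm (pgd_step X L g ((pgd_step X L g ^^ n) z) - xs))\<^sup>2" by simp
  also have "\<dots> \<le> q * (norm ((pgd_step X L g ^^ n) z - xs))\<^sup>2"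
    unfolding q_def by (rule one_step[OF cvx cl ne mu zn xs mn sc sm])
  also have "\<dots> \<le> q * (q ^ n * (norm (z - xs))\<^sup>2)"
    using Suc.IH q0 unfolding q_def[symmetric] by (rule mult_left_mono)
  also have "\<dots> = q ^ Suc n * (norm (z - xs))\<^sup>2" by simp
  finally show ?case unfolding q_def .
qed

lemma qK:
  fixes \<mu> L :: real
  assumes mu: "0 < \<mu>" "\<mu> \<le> L"
  shows "((L - \<mu>) / (L + \<mu>)) ^ nat \<lceil>(L + \<mu>) / (2 * \<mu>) * ln 4\<rceil> \<le> 1 / 4"
proof -
  define a where "a = 2 * \<mu> / (L + \<mu>)"
  define c where "c = (L + \<mu>) / (2 * \<mu>) * ln 4"
  define K where "K = nat \<lceil>c\<rceil>"
  have a0: "a > 0" unfolding a_def using mu by simp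
  have q: "(L - \<mu>) / (L + \<mu>) = 1 - a" using mu by (simp add: a_def field_simps)
  have q0: "0 \<le> 1 - a" using mu q[symmetric] by simp
  have "1 - a \<le> exp (- a)" using exp_ge_add_one_self[of "- a"] by simp
  hence "(1 - a) ^ K \<le> exp (- a) ^ K" by (rule power_mono[OF _ q0])
  also have "\<dots> = exp (real K * (- a))" by (rule exp_of_nat_mult[symmetric])
  also have "\<dots> \<le> exp (- ln 4)"
  proof -
    have c0: "c \<ge> 0" unfolding c_def using mu by simp
    have "real K \<ge> c" unfolding K_def using c0 by linarith
    hence "a * real K \<ge> a * c" using a0 by (simp add: mult_left_mono)
    moreover have "a * c = ln 4"
    proof -
      have "2 * \<mu> / (L + \<mu>) * ((L + \<mu>) / (2 * \<mu>)) = 1" using mu by simp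
      thus ?thesis unfolding a_def c_def by (metis mult.assoc mult_1)
    qed
    ultimately show ?thesis by (simp add: mult.commute)
  qed
  also have "\<dots> = 1 / 4" by (simp add: exp_minus)
  finally show ?thesis unfolding q K_def c_def .
qed

theorem corollary1:
  fixes X :: "'a::euclidean_space set"
    and f :: "nat \<Rightarrow> 'a \<Rightarrow> real"
    and grad :: "nat \<Rightarrow> 'a \<Rightarrow> 'a"
    and T :: nat and \<mu> L G :: real
  assumes T: "T \<ge> 1"
    and X_ne: "X \<noteq> {}" and X_closed: "closed X" and X_convex: "convex X"
    and X_zero: "0 \<in> X" and X_bounded: "bounded X"
    and mu_pos: "0 < \<mu>" and mu_le_L: "\<mu> \<le> L"
    and f_nonneg: "\<And>t x. t \<in> {1..T} \<Longrightarrow> x \<in> X \<Longrightarrow> f t x \<ge> 0"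
    and f_grad: "\<And>t x. t \<in> {1..T} \<Longrightarrow> x \<in> X \<Longrightarrow>
                   (f t has_derivative (\<lambda>h. grad t x \<bullet> h)) (at x within X)"
    and strong_cvx: "\<And>t x y. t \<in> {1..T} \<Longrightarrow> x \<in> X \<Longrightarrow> y \<in> X \<Longrightarrow>
                   \<mu> / 2 * (norm (y - x))\<^sup>2 \<le> f t y - f t x - grad t x \<bullet> (y - x)"
    and smooth: "\<And>t x y. t \<in> {1..T} \<Longrightarrow> x \<in> X \<Longrightarrow> y \<in> X \<Longrightarrow>
                   f t y - f t x - grad t x \<bullet> (y - x) \<le> L / 2 * (norm (y - x))\<^sup>2"
    and G_max: "\<And>t. t \<in> {1..T} \<Longrightarrow>
                   (\<exists>x\<in>X. norm (grad t x) = G) \<and> (\<forall>x\<in>X. norm (grad t x) \<le> G)"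
  shows "qs_cost f T 0 (omgd X L grad (nat \<lceil>(L + \<mu>) / (2 * \<mu>) * ln 4\<rceil>) 0)
           - C_OPT X f T 0
         \<le> (2 * G + diameter X * (10 - \<mu> / (2 * (\<mu> + 4))))
             * (norm (xstar X f 1) + path_length X f T)"
proof -
  define K where "K = nat \<lceil>(L + \<mu>) / (2 * \<mu>) * ln 4\<rceil>"
  define x where "x = omgd X L grad K 0"
  define xs where "xs = xstar X f"
  define D where "D = diameter X"
  have L: "0 < L" using mu_pos mu_le_L by simp
  have xX: "x t \<in> X" for t
  proof (induction t rule: less_induct)
    case (less t)
    show ?case
    proof (cases t)
      case 0 thus ?thesis using X_zero by (simp add: x_def)
    next
      case (Suc m)
      show ?thesis
      proof (cases m)
        case 0 thus ?thesis using X_zero Suc by (simp add: x_def)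
      next
        case (Suc n)
        have "x (Suc n) \<in> X" using less \<open>t = Suc m\<close> Suc by simp
        hence "(pgd_step X L (grad (Suc n)) ^^ K) (x (Suc n)) \<in> X"
          by (rule funpow_in[OF X_closed X_ne])
        thus ?thesis using \<open>t = Suc m\<close> Suc by (simp add: x_def)
      qed
    qed
  qed
  have x1: "x 1 = 0" by (simp add: x_def)
  have xSuc: "x (Suc (Suc n)) = (pgd_step X L (grad (Suc n)) ^^ K) (x (Suc n))" for n
    by (simp add: x_def)
  have cptX: "compact X" using X_bounded X_closed by (simp add: compact_eq_bounded_closed)
  have xsmin: "xs t \<in> X \<and> (\<forall>y\<in>X. f t (xs t) \<le> f t y)" if t: "t \<in> {1..T}" for t
  proof -
    have "continuous_on X (f t)"
      by (rule has_derivative_continuous_on[OF f_grad[OF t]])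
    hence "\<exists>x\<in>X. \<forall>y\<in>X. f t x \<le> f t y" by (rule continuous_attains_inf[OF cptX X_ne])
    hence "\<exists>x. x \<in> X \<and> (\<forall>y\<in>X. f t x \<le> f t y)" by blast
    thus ?thesis unfolding xs_def xstar_def by (rule someI_ex)
  qed
  define e where "e t = norm (x t - xs t)" for t
  define p where "p t = norm (xs t - xs (t - 1))" for t
  have e0: "0 \<le> e t" for t unfolding e_def by simp
  have G0: "0 \<le> G"
  proof -
    have "\<exists>x\<in>X. norm (grad 1 x) = G" using G_max[of 1] T by simp
    then obtain x0 where "norm (grad 1 x0) = G" by blast
    thus ?thesis by (metis norm_ge_zero)
  qed
  have D0: "0 \<le> D" unfolding D_def using X_bounded by (rule diameter_ge_0)
  have contr: "norm (x (t + 1) - xs t) \<le> e t / 2" if t1: "1 \<le> t" and tT: "t + 1 \<le> T" for t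
  proof -
    obtain n where n: "t = Suc n" using t1 by (cases t) auto
    have tin: "t \<in> {1..T}" using t1 tT by simp
    have xt1: "x (t + 1) = (pgd_step X L (grad t) ^^ K) (x t)" using xSuc[of n] n by simp
    have "(norm (x (t + 1) - xs t))\<^sup>2 \<le> ((L - \<mu>) / (L + \<mu>)) ^ K * (norm (x t - xs t))\<^sup>2"
      unfolding xt1
      using iter_contr[OF X_convex X_closed X_ne mu_pos mu_le_L xX xsmin[OF tin, THEN conjunct1]
          xsmin[OF tin, THEN conjunct2] strong_cvx[OF tin] smooth[OF tin]] .
    also have "\<dots> \<le> 1 / 4 * (norm (x t - xs t))\<^sup>2"
      using qK[OF mu_pos mu_le_L] unfolding K_def[symmetric] by (rule mult_right_mono) simp
    also have "\<dots> = (e t / 2)\<^sup>2" unfolding e_def by (simp add: power_divide)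
    finally have "(norm (x (t + 1) - xs t))\<^sup>2 \<le> (e t / 2)\<^sup>2" .
    thus ?thesis by (rule power2_le_imp_le) (simp add: e0)
  qed
  have E: "e (t + 1) \<le> e t / 2 + p (t + 1)" if "1 \<le> t" "t + 1 \<le> T" for t
  proof -
    have "x (t + 1) - xs (t + 1) = (x (t + 1) - xs t) + (xs t - xs (t + 1))" by simp
    hence "e (t + 1) \<le> norm (x (t + 1) - xs t) + norm (xs t - xs (t + 1))"
      unfolding e_def by (metis norm_triangle_ineq)
    moreover have "norm (xs t - xs (t + 1)) = p (t + 1)"
      unfolding p_def by (simp add: norm_minus_commute)
    ultimately show ?thesis using contr[OF that] by linarith
  qed
  have fterm: "f t (x t) - f t (xs t) \<le> G * e t" if t: "t \<in> {1..T}" for t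
  proof -
    have "\<mu> / 2 * (norm (xs t - x t))\<^sup>2 \<le> f t (xs t) - f t (x t) - grad t (x t) \<bullet> (xs t - x t)"
      using strong_cvx[OF t xX xsmin[OF t, THEN conjunct1]] .
    moreover have "0 \<le> \<mu> / 2 * (norm (xs t - x t))\<^sup>2" using mu_pos by simp
    moreover have "- (grad t (x t) \<bullet> (xs t - x t)) = grad t (x t) \<bullet> (x t - xs t)"
      by (simp add: inner_diff_right)
    moreover have "grad t (x t) \<bullet> (x t - xs t) \<le> norm (grad t (x t)) * norm (x t - xs t)"
      by (rule norm_cauchy_schwarz)
    moreover have "norm (grad t (x t)) * norm (x t - xs t) \<le> G * norm (x t - xs t)"
    proof -
      have "norm (grad t (x t)) \<le> G" using G_max[OF t] xX by blast
      thus ?thesis by (rule mult_right_mono) simp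
    qed
    ultimately show ?thesis unfolding e_def by linarith
  qed
  have sw: "1 / 2 * (norm (x t - x (t - 1)))\<^sup>2 \<le> 3 / 4 * D * e (t - 1)"
    if t: "2 \<le> t" "t \<le> T" for t
  proof -
    define nn where "nn = norm (x t - x (t - 1))"
    have nD: "nn \<le> D" unfolding nn_def D_def
      using diameter_bounded_bound[OF X_bounded xX xX] by (simp add: dist_norm)
    have tt: "t - 1 + 1 = t" using t by simp
    have "x t - x (t - 1) = (x t - xs (t - 1)) + (xs (t - 1) - x (t - 1))" by simp
    hence "nn \<le> norm (x t - xs (t - 1)) + norm (xs (t - 1) - x (t - 1))"
      unfolding nn_def by (metis norm_triangle_ineq)
    moreover have "norm (x t - xs (t - 1)) \<le> e (t - 1) / 2"
      using contr[of "t - 1"] t unfolding tt by simp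
    moreover have "norm (xs (t - 1) - x (t - 1)) = e (t - 1)"
      unfolding e_def by (simp add: norm_minus_commute)
    ultimately have n3: "nn \<le> 3 / 2 * e (t - 1)" by linarith
    have "nn\<^sup>2 \<le> D * nn" unfolding power2_eq_square
      using nD by (simp add: mult_right_mono nn_def)
    also have "\<dots> \<le> D * (3 / 2 * e (t - 1))" using n3 D0 by (rule mult_left_mono)
    finally show ?thesis unfolding nn_def by simp
  qed
  define c where "c t = f t (x t) + 1 / 2 * (norm (x t - (if t = 1 then 0 else x (t - 1))))\<^sup>2 - f t (xs t)" for t
  define \<alpha> where "\<alpha> = 2 * G + 3 / 2 * D"
  have \<alpha>0: "0 \<le> \<alpha>" unfolding \<alpha>_def using G0 D0 by simp
  have inv: "1 \<le> n \<longrightarrow> n \<le> T \<longrightarrow>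
      (\<Sum>t=1..n. c t) \<le> \<alpha> * (e 1 + (\<Sum>t=2..n. p t)) - (G + 3 / 2 * D) * e n" for n
  proof (induction n)
    case 0
    show ?case by simp
  next
    case (Suc n)
    show ?case
    proof (intro impI)
      assume h1: "1 \<le> Suc n" and h2: "Suc n \<le> T"
      show "(\<Sum>t=1..Suc n. c t) \<le> \<alpha> * (e 1 + (\<Sum>t=2..Suc n. p t)) - (G + 3 / 2 * D) * e (Suc n)"
      proof (cases n)
        case 0
        have "c 1 \<le> G * e 1" unfolding c_def using fterm[of 1] T x1 by simp
        moreover have "\<alpha> * (e 1 + 0) - (G + 3 / 2 * D) * e 1 = G * e 1" by (simp add: \<alpha>_def algebra_simps)
        ultimately show ?thesis using 0 by simp
      next
        case (Suc m)
        have n1: "1 \<le> n" "n + 1 \<le> T" using Suc h2 by auto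
        have IH: "(\<Sum>t=1..n. c t) \<le> \<alpha> * (e 1 + (\<Sum>t=2..n. p t)) - (G + 3 / 2 * D) * e n"
          using Suc.IH n1 by simp
        have s1: "(\<Sum>t=1..Suc n. c t) = (\<Sum>t=1..n. c t) + c (Suc n)" by simp
        have s2: "(\<Sum>t=2..Suc n. p t) = (\<Sum>t=2..n. p t) + p (Suc n)" using Suc by simp
        have cS: "c (Suc n) \<le> G * e (Suc n) + 3 / 4 * D * e n"
        proof -
          have a: "f (Suc n) (x (Suc n)) - f (Suc n) (xs (Suc n)) \<le> G * e (Suc n)"
            using fterm[of "Suc n"] h2 by simp
          have b: "1 / 2 * (norm (x (Suc n) - x (Suc n - 1)))\<^sup>2 \<le> 3 / 4 * D * e (Suc n - 1)"
            using sw[of "Suc n"] h2 Suc by simp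
          show ?thesis using a b Suc unfolding c_def by simp
        qed
        have En: "e (Suc n) \<le> e n / 2 + p (Suc n)" using E[OF n1] by simp
        have q0: "\<alpha> * e (Suc n) \<le> \<alpha> * (e n / 2 + p (Suc n))" using En \<alpha>0 by (rule mult_left_mono)
        have q1: "\<alpha> * (e 1 + ((\<Sum>t=2..n. p t) + p (Suc n))) = \<alpha> * (e 1 + (\<Sum>t=2..n. p t)) + \<alpha> * p (Suc n)"
          by (simp add: distrib_left)
        have q2: "\<alpha> * (e n / 2 + p (Suc n)) = \<alpha> * e n / 2 + \<alpha> * p (Suc n)" by (simp add: distrib_left)
        have q3: "(G + 3 / 2 * D) * e (Suc n) = \<alpha> * e (Suc n) - G * e (Suc n)" by (simp add: \<alpha>_def algebra_simps)
        have q4: "(G + 3 / 2 * D) * e n = \<alpha> * e n / 2 + 3 / 4 * D * e n" by (simp add: \<alpha>_def field_simps)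
        define S where "S = (\<Sum>t=1..n. c t)"
        define P where "P = (\<Sum>t=2..n. p t)"
        have "S + c (Suc n) \<le> \<alpha> * (e 1 + (P + p (Suc n))) - (G + 3 / 2 * D) * e (Suc n)"
          using lin_aux[OF IH[folded S_def P_def] cS q0[unfolded q2] q1[folded P_def] q3 q4] .
        thus ?thesis unfolding s1 s2 S_def P_def .
      qed
    qed
  qed
  have cost: "qs_cost f T 0 x = (\<Sum>t=1..T. f t (x t) + 1 / 2 * (norm (x t - (if t = 1 then 0 else x (t - 1))))\<^sup>2)"
    unfolding qs_cost_def by simp
  have copt: "(\<Sum>t=1..T. f t (xs t)) \<le> C_OPT X f T 0"
    unfolding C_OPT_def
  proof (rule cInf_greatest)
    have "qs_cost f T 0 (\<lambda>_. 0) \<in> {qs_cost f T 0 y |y. \<forall>t\<in>{1..T}. y t \<in> X}" using X_zero by auto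
    thus "{qs_cost f T 0 y |y. \<forall>t\<in>{1..T}. y t \<in> X} \<noteq> {}" by blast
  next
    fix v assume "v \<in> {qs_cost f T 0 y |y. \<forall>t\<in>{1..T}. y t \<in> X}"
    then obtain y where v: "v = qs_cost f T 0 y" and y: "\<forall>t\<in>{1..T}. y t \<in> X" by blast
    have "(\<Sum>t=1..T. f t (xs t)) \<le> (\<Sum>t=1..T. f t (y t) + (1/2) * (norm (y t - (if t = 1 then 0 else y (t - 1))))\<^sup>2)"
    proof (rule sum_mono)
      fix t assume t: "t \<in> {1..T}"
      have "f t (xs t) \<le> f t (y t)" using xsmin[OF t] y t by blast
      thus "f t (xs t) \<le> f t (y t) + (1/2) * (norm (y t - (if t = 1 then 0 else y (t - 1))))\<^sup>2"
      proof -
        have "0 \<le> (1/2) * (norm (y t - (if t = 1 then 0 else y (t - 1))))\<^sup>2" by simp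
        thus ?thesis using \<open>f t (xs t) \<le> f t (y t)\<close> by linarith
      qed
    qed
    thus "(\<Sum>t=1..T. f t (xs t)) \<le> v" unfolding v qs_cost_def .
  qed
  have diff: "qs_cost f T 0 x - C_OPT X f T 0 \<le> (\<Sum>t=1..T. c t)"
    using copt unfolding cost c_def by (simp add: sum_subtractf)
  have fin1: "qs_cost f T 0 x - C_OPT X f T 0 \<le> \<alpha> * (e 1 + (\<Sum>t=2..T. p t))"
  proof -
    have "0 \<le> (G + 3 / 2 * D) * e T" using G0 D0 e0 by simp
    thus ?thesis using diff inv[of T] T by linarith
  qed
  have e1: "e 1 = norm (xstar X f 1)" unfolding e_def x1 xs_def by simp
  have P: "(\<Sum>t=2..T. p t) = path_length X f T" unfolding p_def path_length_def xs_def ..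
  have nn: "0 \<le> e 1 + (\<Sum>t=2..T. p t)" using e0 by (simp add: p_def sum_nonneg)
  have coef: "\<alpha> \<le> 2 * G + diameter X * (10 - \<mu> / (2 * (\<mu> + 4)))"
  proof -
    have "\<mu> / (2 * (\<mu> + 4)) \<le> 1 / 2" using mu_pos by (simp add: field_simps)
    hence "3 / 2 \<le> (10 - \<mu> / (2 * (\<mu> + 4)))" by simp
    hence "D * (3 / 2) \<le> D * (10 - \<mu> / (2 * (\<mu> + 4)))" using D0 by (rule mult_left_mono)
    thus ?thesis unfolding \<alpha>_def D_def by simp
  qed
  have "\<alpha> * (e 1 + (\<Sum>t=2..T. p t)) \<le> (2 * G + diameter X * (10 - \<mu> / (2 * (\<mu> + 4)))) * (e 1 + (\<Sum>t=2..T. p t))"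
    using coef nn by (rule mult_right_mono)
  with fin1 have "qs_cost f T 0 x - C_OPT X f T 0 \<le> (2 * G + diameter X * (10 - \<mu> / (2 * (\<mu> + 4)))) * (e 1 + (\<Sum>t=2..T. p t))"
    by linarith
  thus ?thesis unfolding e1 P x_def K_def .
qed

end
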